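(* Let $\dot x=f(x,u)$, $y=h(x)$ be a monotone input-output system endowed with a static input-state characteristic $k_x:{\cal U}\rightrightarrows{\cal X}$. Then $k_x$ is weakly non-decreasing: for all $p,q\in{\cal U}$ with $p\preceq q$ and all $k_p\in k_x(p)$, $k_q\in k_x(q)$, there exist $r_p\in k_x(p)$ and $r_q\in k_x(q)$ with $r_p\preceq k_q$ and $k_p\preceq r_q$.
   Context: An i/o system is $\dot x=f(x,u)$, $y=h(x)$ with state space ${\cal X}\subseteq\mathbb R^n$ (closure of its interior), input space ${\cal U}$, output space ${\cal Y}$ subsets of Euclidean spaces, $f,h$ locally Lipschitz on an open set containing ${\cal X}$, solutions $\phi(t,x_0,{\bf u})$ defined on $[0,\infty)$ and valued in ${\cal X}$ for all locally essentially bounded measurable inputs. All spaces are partially ordered by closed pointed convex cones $K$ via $p\preceq q\iff q-p\in K$; inputs are ordered pointwise a.e. Monotone: $h$ order preserving and $p\preceq q$, ${\bf u}\preceq{\bf v}$ imply $\phi(t,p,{\bf u})\preceq\phi(t,q,{\bf v})$ for all $t\ge0$. Static i/s characteristic: a map $k_x:{\cal U}\rightrightarrows{\cal X}$ with nonempty values such that (i) its graph equals $\{(\bar u,\bar x):f(\bar x,\bar u)=0\}$; (ii) for every constant $\bar u$, every solution $\phi(t,p,\bar u)$ converges as $t\to\infty$ to some point of $k_x(\bar u)$; (iii) static Lyapunov stability at each equilibrium pair (for each $\varepsilon>0$ there is $\delta>0$ such that trajectories of $f(\cdot,\bar u)$ starting within $\delta$ of $\bar x$ and converging to $\bar x$ stay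 within $\varepsilon$ of $\bar x$); (iv) for each $\bar u$, the points of $k_x(\bar u)$ are isolated compact invariant sets for $f(\cdot,\bar u)$ and contain no cycle of heteroclinic chains (in the sense of Thieme). *)

theory Defs
  imports "HOL-Analysis.Analysis"
begin

definition closed_pointed_convex_cone :: "'a::euclidean_space set \<Rightarrow> bool" where
  "closed_pointed_convex_cone K \<longleftrightarrow>
     closed K \<and> convex K \<and> 0 \<in> K \<and> (\<forall>x\<in>K. \<forall>c::real. c \<ge> 0 \<longrightarrow> c *\<^sub>R x \<in> K)
     \<and> K \<inter> uminus ` K = {0}"

definition cone_le :: "'a::euclidean_space set \<Rightarrow> 'a \<Rightarrow> 'a \<Rightarrow> bool" where
  "cone_le K p q \<longleftrightarrow> q - p \<in> K"

definition admissible_input :: "'u::euclidean_space set \<Rightarrow> (real \<Rightarrow> 'u) \<Rightarrow> bool" where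
  "admissible_input U u \<longleftrightarrow>
     u \<in> borel_measurable lborel \<and>
     (\<forall>T. \<exists>B. AE t in lborel. t \<in> {0..T} \<longrightarrow> norm (u t) \<le> B) \<and>
     (\<forall>t\<ge>0. u t \<in> U)"

definition input_le :: "'u::euclidean_space set \<Rightarrow> (real \<Rightarrow> 'u) \<Rightarrow> (real \<Rightarrow> 'u) \<Rightarrow> bool" where
  "input_le KU u v \<longleftrightarrow> (AE t in lborel. t \<ge> 0 \<longrightarrow> cone_le KU (u t) (v t))"

definition locally_lipschitz_on :: "'a::metric_space set \<Rightarrow> ('a \<Rightarrow> 'b::metric_space) \<Rightarrow> bool" where
  "locally_lipschitz_on W g \<longleftrightarrow>
     (\<forall>z\<in>W. \<exists>e>0. \<exists>L. L-lipschitz_on (ball z e \<inter> W) g)"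

text \<open>\<open>phi t x0 u\<close> is the (Caratheodory) solution of xdot = f(x,u) with x(0)=x0.\<close>
definition io_system ::
  "'x::euclidean_space set \<Rightarrow> 'u::euclidean_space set \<Rightarrow> 'y::euclidean_space set \<Rightarrow>
   ('x \<Rightarrow> 'u \<Rightarrow> 'x) \<Rightarrow> ('x \<Rightarrow> 'y) \<Rightarrow> (real \<Rightarrow> 'x \<Rightarrow> (real \<Rightarrow> 'u) \<Rightarrow> 'x) \<Rightarrow> bool" where
  "io_system X U Y f h phi \<longleftrightarrow>
     X = closure (interior X) \<and>
     h ` X \<subseteq> Y \<and>
     (\<exists>W. open W \<and> X \<times> U \<subseteq> W \<and> locally_lipschitz_on W (\<lambda>(x, u). f x u)) \<and>
     (\<exists>W. open W \<and> X \<subseteq> W \<and> locally_lipschitz_on W h) \<and>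
     (\<forall>x0\<in>X. \<forall>u. admissible_input U u \<longrightarrow>
        (\<forall>t\<ge>0. phi t x0 u \<in> X \<and>
           ((\<lambda>s. f (phi s x0 u) (u s)) has_integral (phi t x0 u - x0)) {0..t}))"

definition monotone_io_system ::
  "'x::euclidean_space set \<Rightarrow> 'u::euclidean_space set \<Rightarrow> 'y::euclidean_space set \<Rightarrow>
   'x set \<Rightarrow> 'u set \<Rightarrow> 'y set \<Rightarrow>
   ('x \<Rightarrow> 'u \<Rightarrow> 'x) \<Rightarrow> ('x \<Rightarrow> 'y) \<Rightarrow> (real \<Rightarrow> 'x \<Rightarrow> (real \<Rightarrow> 'u) \<Rightarrow> 'x) \<Rightarrow> bool" where
  "monotone_io_system X U Y KX KU KY f h phi \<longleftrightarrow>
     io_system X U Y f h phi \<and>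
     closed_pointed_convex_cone KX \<and> closed_pointed_convex_cone KU \<and>
     closed_pointed_convex_cone KY \<and>
     (\<forall>p\<in>X. \<forall>q\<in>X. cone_le KX p q \<longrightarrow> cone_le KY (h p) (h q)) \<and>
     (\<forall>p\<in>X. \<forall>q\<in>X. \<forall>u v. admissible_input U u \<longrightarrow> admissible_input U v \<longrightarrow>
        cone_le KX p q \<longrightarrow> input_le KU u v \<longrightarrow>
        (\<forall>t\<ge>0. cone_le KX (phi t p u) (phi t q v)))"

definition omega_limit :: "(real \<Rightarrow> 'x::metric_space) \<Rightarrow> 'x set" where
  "omega_limit g = {y. \<exists>s::nat \<Rightarrow> real. filterlim s at_top sequentially \<and> (g \<circ> s) \<longlonglongrightarrow> y}"

definition alpha_limit :: "(real \<Rightarrow> 'x::metric_space) \<Rightarrow> 'x set" where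
  "alpha_limit g = {y. \<exists>s::nat \<Rightarrow> real. filterlim s at_bot sequentially \<and> (g \<circ> s) \<longlonglongrightarrow> y}"

definition total_trajectory ::
  "'x::euclidean_space set \<Rightarrow> (real \<Rightarrow> 'x \<Rightarrow> (real \<Rightarrow> 'u) \<Rightarrow> 'x) \<Rightarrow> 'u \<Rightarrow> (real \<Rightarrow> 'x) \<Rightarrow> bool" where
  "total_trajectory X phi ub g \<longleftrightarrow>
     (\<forall>s. g s \<in> X) \<and> (\<forall>s. \<forall>t\<ge>0. phi t (g s) (\<lambda>_. ub) = g (s + t))"

definition invariant_set ::
  "(real \<Rightarrow> 'x \<Rightarrow> (real \<Rightarrow> 'u) \<Rightarrow> 'x) \<Rightarrow> 'u \<Rightarrow> 'x set \<Rightarrow> bool" where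
  "invariant_set phi ub A \<longleftrightarrow> (\<forall>t\<ge>0. (\<lambda>x. phi t x (\<lambda>_. ub)) ` A = A)"

definition isolated_compact_invariant ::
  "'x::euclidean_space set \<Rightarrow> (real \<Rightarrow> 'x \<Rightarrow> (real \<Rightarrow> 'u) \<Rightarrow> 'x) \<Rightarrow> 'u \<Rightarrow> 'x set \<Rightarrow> bool" where
  "isolated_compact_invariant X phi ub M \<longleftrightarrow>
     M \<subseteq> X \<and> compact M \<and> invariant_set phi ub M \<and>
     (\<exists>N. open N \<and> M \<subseteq> N \<and>
        (\<forall>A. A \<subseteq> N \<inter> X \<longrightarrow> invariant_set phi ub A \<longrightarrow> A \<subseteq> M))"

text \<open>Thieme: M1 is chained to M2 if there is x not in M1 \<union> M2 lying in the stable set of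
  M2 and the unstable set of M1.\<close>
definition chained_to ::
  "'x::euclidean_space set \<Rightarrow> (real \<Rightarrow> 'x \<Rightarrow> (real \<Rightarrow> 'u) \<Rightarrow> 'x) \<Rightarrow> 'u \<Rightarrow> 'x set \<Rightarrow> 'x set \<Rightarrow> bool" where
  "chained_to X phi ub M1 M2 \<longleftrightarrow>
     (\<exists>x\<in>X. x \<notin> M1 \<union> M2 \<and>
        omega_limit (\<lambda>t. phi t x (\<lambda>_. ub)) \<noteq> {} \<and>
        omega_limit (\<lambda>t. phi t x (\<lambda>_. ub)) \<subseteq> M2 \<and>
        (\<exists>g. total_trajectory X phi ub g \<and> g 0 = x \<and>
             alpha_limit g \<noteq> {} \<and> alpha_limit g \<subseteq> M1))"

definition has_heteroclinic_cycle ::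
  "'x::euclidean_space set \<Rightarrow> (real \<Rightarrow> 'x \<Rightarrow> (real \<Rightarrow> 'u) \<Rightarrow> 'x) \<Rightarrow> 'u \<Rightarrow> 'x set set \<Rightarrow> bool" where
  "has_heteroclinic_cycle X phi ub \<M> \<longleftrightarrow>
     (\<exists>Ms. Ms \<noteq> [] \<and> set Ms \<subseteq> \<M> \<and>
        (\<forall>i<length Ms. chained_to X phi ub (Ms ! i) (Ms ! ((i + 1) mod length Ms))))"

definition static_is_characteristic ::
  "'x::euclidean_space set \<Rightarrow> 'u::euclidean_space set \<Rightarrow> ('x \<Rightarrow> 'u \<Rightarrow> 'x) \<Rightarrow>
   (real \<Rightarrow> 'x \<Rightarrow> (real \<Rightarrow> 'u) \<Rightarrow> 'x) \<Rightarrow> ('u \<Rightarrow> 'x set) \<Rightarrow> bool" where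
  "static_is_characteristic X U f phi kx \<longleftrightarrow>
     (\<forall>ub\<in>U. kx ub \<noteq> {}) \<and>
     {(ub, xb). ub \<in> U \<and> xb \<in> kx ub} = {(ub, xb). ub \<in> U \<and> xb \<in> X \<and> f xb ub = 0} \<and>
     (\<forall>ub\<in>U. \<forall>p\<in>X. \<exists>xb\<in>kx ub. ((\<lambda>t. phi t p (\<lambda>_. ub)) \<longlongrightarrow> xb) at_top) \<and>
     (\<forall>ub\<in>U. \<forall>xb\<in>kx ub. \<forall>\<epsilon>>0. \<exists>\<delta>>0. \<forall>p\<in>X.
        dist p xb < \<delta> \<longrightarrow> ((\<lambda>t. phi t p (\<lambda>_. ub)) \<longlongrightarrow> xb) at_top \<longrightarrow>
        (\<forall>t\<ge>0. dist (phi t p (\<lambda>_. ub)) xb < \<epsilon>)) \<and>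
     (\<forall>ub\<in>U. (\<forall>xb\<in>kx ub. isolated_compact_invariant X phi ub {xb}) \<and>
        \<not> has_heteroclinic_cycle X phi ub ((\<lambda>xb. {xb}) ` kx ub))"

end

theory Submission
  imports Defs
begin

lemma adm_const: "c \<in> U \<Longrightarrow> admissible_input U (\<lambda>_. c)"
  unfolding admissible_input_def by auto

lemma input_le_const: "cone_le K p q \<Longrightarrow> input_le K (\<lambda>_. p) (\<lambda>_. q)"
  unfolding input_le_def by auto

lemma lim_closed:
  assumes "closed K" "\<forall>t\<ge>0. g t \<in> K" "(g \<longlongrightarrow> l) (at_top::real filter)"
  shows "l \<in> K"
proof (rule Lim_in_closed_set[OF assms(1) _ _ assms(3)])
  show "\<forall>\<^sub>F t in at_top. g t \<in> K" unfolding eventually_at_top_linorder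
    using assms(2) by blast
qed auto

theorem lemma1:
  fixes X :: "'x::euclidean_space set" and U :: "'u::euclidean_space set"
    and Y :: "'y::euclidean_space set"
    and KX :: "'x set" and KU :: "'u set" and KY :: "'y set"
    and f :: "'x \<Rightarrow> 'u \<Rightarrow> 'x" and h :: "'x \<Rightarrow> 'y"
    and phi :: "real \<Rightarrow> 'x \<Rightarrow> (real \<Rightarrow> 'u) \<Rightarrow> 'x" and kx :: "'u \<Rightarrow> 'x set"
  assumes "monotone_io_system X U Y KX KU KY f h phi"
    and "static_is_characteristic X U f phi kx"
  shows "\<forall>p\<in>U. \<forall>q\<in>U. cone_le KU p q \<longrightarrow>
           (\<forall>k_p\<in>kx p. \<forall>k_q\<in>kx q.
              (\<exists>r_p\<in>kx p. \<exists>r_q\<in>kx q. cone_le KX r_p k_q \<and> cone_le KX k_p r_q))"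
proof (intro ballI impI)
  fix p q k_p k_q
  assume pU: "p \<in> U" and qU: "q \<in> U" and pq: "cone_le KU p q"
    and kp: "k_p \<in> kx p" and kq: "k_q \<in> kx q"
  have clK: "closed KX" using assms(1)
    unfolding monotone_io_system_def closed_pointed_convex_cone_def by (elim conjE) assumption
  have mono: "\<And>a b u v t. a \<in> X \<Longrightarrow> b \<in> X \<Longrightarrow> admissible_input U u \<Longrightarrow> admissible_input U v \<Longrightarrow>
        cone_le KX a b \<Longrightarrow> input_le KU u v \<Longrightarrow> t \<ge> 0 \<Longrightarrow> cone_le KX (phi t a u) (phi t b v)"
    using assms(1) unfolding monotone_io_system_def by (elim conjE) metis
  have refl: "cone_le KX a a" for a using assms(1)
    unfolding monotone_io_system_def closed_pointed_convex_cone_def cone_le_def by simp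
  have graph: "{(ub, xb). ub \<in> U \<and> xb \<in> kx ub} = {(ub, xb). ub \<in> U \<and> xb \<in> X \<and> f xb ub = 0}"
    using assms(2) unfolding static_is_characteristic_def by (elim conjE) assumption
  have inX: "\<And>ub xb. ub \<in> U \<Longrightarrow> xb \<in> kx ub \<Longrightarrow> xb \<in> X"
  proof -
    fix ub xb assume "ub \<in> U" "xb \<in> kx ub"
    then have "(ub, xb) \<in> {(ub, xb). ub \<in> U \<and> xb \<in> kx ub}" by simp
    then show "xb \<in> X" unfolding graph by simp
  qed
  have conv: "\<And>ub x. ub \<in> U \<Longrightarrow> x \<in> X \<Longrightarrow> \<exists>xb\<in>kx ub. ((\<lambda>t. phi t x (\<lambda>_. ub)) \<longlongrightarrow> xb) at_top"
    using assms(2) unfolding static_is_characteristic_def by (elim conjE) metis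
  have fix_pt: "\<And>ub xb t. ub \<in> U \<Longrightarrow> xb \<in> kx ub \<Longrightarrow> t \<ge> 0 \<Longrightarrow> phi t xb (\<lambda>_. ub) = xb"
  proof -
    fix ub xb and t :: real assume "ub \<in> U" "xb \<in> kx ub" "t \<ge> 0"
    then have "isolated_compact_invariant X phi ub {xb}"
      using assms(2) unfolding static_is_characteristic_def by (elim conjE) metis
    then have "invariant_set phi ub {xb}"
      unfolding isolated_compact_invariant_def by (elim conjE)
    then have "(\<lambda>x. phi t x (\<lambda>_. ub)) ` {xb} = {xb}"
      using \<open>t \<ge> 0\<close> unfolding invariant_set_def by simp
    then show "phi t xb (\<lambda>_. ub) = xb" by simp
  qed
  have kqX: "k_q \<in> X" using inX qU kq by blast
  have kpX: "k_p \<in> X" using inX pU kp by blast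
  obtain r_p where rp: "r_p \<in> kx p" and lp: "((\<lambda>t. phi t k_q (\<lambda>_. p)) \<longlongrightarrow> r_p) at_top"
    using conv[OF pU kqX] by blast
  obtain r_q where rq: "r_q \<in> kx q" and lq: "((\<lambda>t. phi t k_p (\<lambda>_. q)) \<longlongrightarrow> r_q) at_top"
    using conv[OF qU kpX] by blast
  have A: "\<forall>t\<ge>0. k_q - phi t k_q (\<lambda>_. p) \<in> KX"
  proof (intro allI impI)
    fix t :: real assume t: "t \<ge> 0"
    have "cone_le KX (phi t k_q (\<lambda>_. p)) (phi t k_q (\<lambda>_. q))"
      by (rule mono[OF kqX kqX adm_const[OF pU] adm_const[OF qU] refl input_le_const[OF pq] t])
    then show "k_q - phi t k_q (\<lambda>_. p) \<in> KX"
      using fix_pt[OF qU kq t] unfolding cone_le_def by simp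
  qed
  have B: "\<forall>t\<ge>0. phi t k_p (\<lambda>_. q) - k_p \<in> KX"
  proof (intro allI impI)
    fix t :: real assume t: "t \<ge> 0"
    have "cone_le KX (phi t k_p (\<lambda>_. p)) (phi t k_p (\<lambda>_. q))"
      by (rule mono[OF kpX kpX adm_const[OF pU] adm_const[OF qU] refl input_le_const[OF pq] t])
    then show "phi t k_p (\<lambda>_. q) - k_p \<in> KX"
      using fix_pt[OF pU kp t] unfolding cone_le_def by simp
  qed
  have "k_q - r_p \<in> KX"
    by (rule lim_closed[OF clK A]) (intro tendsto_intros lp)
  moreover have "r_q - k_p \<in> KX"
    by (rule lim_closed[OF clK B]) (intro tendsto_intros lq)
  ultimately show "\<exists>r_p\<in>kx p. \<exists>r_q\<in>kx q. cone_le KX r_p k_q \<and> cone_le KX k_p r_q"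
    using rp rq unfolding cone_le_def by blast
qed

end
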